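(* On the Lie algebra $\mathfrak{d}_{4,2}$ with basis $e_1,\dots,e_4$, non-zero brackets $[e_1,e_2]=e_3$, $[e_4,e_3]=e_3$, $[e_4,e_1]=2e_1$, $[e_4,e_2]=-e_2$, and orientation $\mu=e^{1234}$, let $J$ be the almost complex structure inducing the orientation $\mu$ whose space of $J$-anti-invariant 2-forms is $\Lambda^-_J=\mathrm{Span}\big((e^{12}+e^{34})+(e^{14}+e^{23}),\ e^{13}-e^{24}\big)$ (explicitly, $Je_1=\tfrac{1}{\sqrt2}(e_2-e_4)$, $Je_2=\tfrac{1}{\sqrt2}(-e_1-e_3)$, $Je_3=\tfrac{1}{\sqrt2}(e_2+e_4)$, $Je_4=\tfrac{1}{\sqrt2}(e_1-e_3)$). Then $J$ is tamed by some symplectic form on $\mathfrak{d}_{4,2}$ but is not compatible with any symplectic form on $\mathfrak{d}_{4,2}$.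
   Context: $e^1,\dots,e^4$ is the dual basis, $e^{ij}=e^i\wedge e^j$, $e^{1234}=e^1\wedge e^2\wedge e^3\wedge e^4$. A 2-form $\alpha$ is $J$-anti-invariant if $\alpha(J\cdot,J\cdot)=-\alpha$. The Chevalley–Eilenberg differential is $d\alpha(u,v)=-\alpha([u,v])$ on 1-forms, extended by Leibniz; a symplectic form is a closed non-degenerate 2-form. $J$ is tamed by $\omega$ if $\omega(u,Ju)>0$ for all $u\neq0$, and compatible with $\omega$ if tamed and $\omega(Jv,Jw)=\omega(v,w)$ for all $v,w$. *)

theory Defs
  imports "HOL-Analysis.Analysis"
begin

definition e :: "4 \<Rightarrow> real^4" where
  "e i = axis i 1"

definition br :: "4 \<Rightarrow> 4 \<Rightarrow> real^4" where
  "br i j =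
    (if i = 1 \<and> j = 2 then e 3 else if i = 2 \<and> j = 1 then - e 3
     else if i = 4 \<and> j = 3 then e 3 else if i = 3 \<and> j = 4 then - e 3
     else if i = 4 \<and> j = 1 then 2 *\<^sub>R e 1 else if i = 1 \<and> j = 4 then - (2 *\<^sub>R e 1)
     else if i = 4 \<and> j = 2 then - e 2 else if i = 2 \<and> j = 4 then e 2
     else 0)"

definition lie :: "real^4 \<Rightarrow> real^4 \<Rightarrow> real^4" where
  "lie u v = (\<Sum>i\<in>UNIV. \<Sum>j\<in>UNIV. (u $ i * v $ j) *\<^sub>R br i j)"

definition Jb :: "4 \<Rightarrow> real^4" where
  "Jb i =
    (if i = 1 then (1 / sqrt 2) *\<^sub>R (e 2 - e 4)
     else if i = 2 then (1 / sqrt 2) *\<^sub>R (- e 1 - e 3)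
     else if i = 3 then (1 / sqrt 2) *\<^sub>R (e 2 + e 4)
     else (1 / sqrt 2) *\<^sub>R (e 1 - e 3))"

definition J :: "real^4 \<Rightarrow> real^4" where
  "J u = (\<Sum>i\<in>UNIV. u $ i *\<^sub>R Jb i)"

definition two_form :: "(real^4 \<Rightarrow> real^4 \<Rightarrow> real) \<Rightarrow> bool" where
  "two_form \<omega> \<longleftrightarrow> bilinear \<omega> \<and> (\<forall>u. \<omega> u u = 0)"

text \<open>Chevalley--Eilenberg differential of a 2-form (trivial coefficients).\<close>
definition d2 :: "(real^4 \<Rightarrow> real^4 \<Rightarrow> real) \<Rightarrow> real^4 \<Rightarrow> real^4 \<Rightarrow> real^4 \<Rightarrow> real" where
  "d2 \<omega> x y z = - \<omega> (lie x y) z + \<omega> (lie x z) y - \<omega> (lie y z) x"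

definition symplectic :: "(real^4 \<Rightarrow> real^4 \<Rightarrow> real) \<Rightarrow> bool" where
  "symplectic \<omega> \<longleftrightarrow> two_form \<omega> \<and> (\<forall>x y z. d2 \<omega> x y z = 0)
     \<and> (\<forall>u. u \<noteq> 0 \<longrightarrow> (\<exists>v. \<omega> u v \<noteq> 0))"

definition tames :: "(real^4 \<Rightarrow> real^4 \<Rightarrow> real) \<Rightarrow> (real^4 \<Rightarrow> real^4) \<Rightarrow> bool" where
  "tames \<omega> JJ \<longleftrightarrow> (\<forall>u. u \<noteq> 0 \<longrightarrow> \<omega> u (JJ u) > 0)"

definition compatible :: "(real^4 \<Rightarrow> real^4 \<Rightarrow> real) \<Rightarrow> (real^4 \<Rightarrow> real^4) \<Rightarrow> bool" where
  "compatible \<omega> JJ \<longleftrightarrow> tames \<omega> JJ \<and> (\<forall>v w. \<omega> (JJ v) (JJ w) = \<omega> v w)"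

end

theory Submission
  imports Defs
begin

lemma e_comp: "e i $ k = (if k = i then 1 else 0)"
  by (simp add: e_def axis_def)

lemma J_e: "J (e i) = Jb i"
  using exhaust_4[of i] unfolding J_def by (auto simp: sum_4 e_comp)

lemma lie_e: "lie (e i) (e j) = br i j"
  using exhaust_4[of i] exhaust_4[of j] unfolding lie_def by (auto simp: sum_4 e_comp)

lemma J_comp:
  "J u $ 1 = (u$4 - u$2) / sqrt 2" "J u $ 2 = (u$1 + u$3) / sqrt 2"
  "J u $ 3 = (- u$2 - u$4) / sqrt 2" "J u $ 4 = (u$3 - u$1) / sqrt 2"
  unfolding J_def by (simp_all add: sum_4 Jb_def e_comp field_simps)

lemma lie_comp:
  "lie u v $ 1 = 2 * (u$4* v$1 - u$1* v$4)" "lie u v $ 2 = u$2* v$4 - u$4* v$2"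
  "lie u v $ 3 = u$1* v$2 - u$2* v$1 + u$4* v$3 - u$3* v$4" "lie u v $ 4 = 0"
  unfolding lie_def by (simp_all add: sum_4 br_def e_comp algebra_simps)

definition w0 :: "real^4 \<Rightarrow> real^4 \<Rightarrow> real" where
  "w0 u v = - (u$1* v$4 - u$4* v$1) - (u$2* v$3 - u$3* v$2)"

lemma s2: "sqrt 2 * (sqrt 2 * x) = 2 * (x::real)" by (simp flip: mult.assoc)

lemma w0_tame: "w0 u (J u) = (u$1^2 + u$2^2 + u$3^2 + u$4^2) / sqrt 2"
  unfolding w0_def J_comp by (simp add: field_simps power2_eq_square s2)

lemma w0_tames: "tames w0 J"
  unfolding tames_def
proof (intro allI impI)
  fix u :: "real^4" assume "u \<noteq> 0"
  then obtain k where "u $ k \<noteq> 0" by (metis vec_eq_iff zero_index)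
  then have "u$1^2 + u$2^2 + u$3^2 + u$4^2 > 0"
    using exhaust_4[of k] by (auto simp: add_pos_nonneg add_nonneg_pos)
  then show "w0 u (J u) > 0" unfolding w0_tame by simp
qed

lemma w0_symp: "symplectic w0"
  unfolding symplectic_def two_form_def
proof (intro conjI allI impI)
  show "bilinear w0"
    unfolding bilinear_def linear_iff w0_def by (auto simp: algebra_simps)
  fix u :: "real^4"
  show "w0 u u = 0" unfolding w0_def by simp
  { assume "u \<noteq> 0" then have "w0 u (J u) > 0" using w0_tames unfolding tames_def by blast
    then show "\<exists>v. w0 u v \<noteq> 0" by (intro exI[of _ "J u"]) simp }
next
  fix x y z :: "real^4"
  show "d2 w0 x y z = 0" unfolding d2_def w0_def lie_comp by (simp add: algebra_simps)
qed

lemma antisym: assumes "two_form w" shows "w x y = - w y x"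
proof -
  have b: "bilinear w" and z: "\<And>u. w u u = 0" using assms unfolding two_form_def by auto
  have "w (x+y) (x+y) = 0" by (rule z)
  then show ?thesis using z[of x] z[of y] by (simp add: bilinear_ladd[OF b] bilinear_radd[OF b])
qed

lemma no_compat: assumes s: "symplectic w" and c: "compatible w J" shows False
proof -
  have tf: "two_form w" using s unfolding symplectic_def by auto
  then have b: "bilinear w" unfolding two_form_def by auto
  have cl: "d2 w (e 1) (e 2) (e 4) = 0" using s unfolding symplectic_def by auto
  have cl2: "w (e 3) (e 4) = - w (e 1) (e 2)"
    using cl unfolding d2_def lie_e br_def
    by (simp add: bilinear_lmul[OF b] bilinear_lneg[OF b] antisym[OF tf, of "e 2" "e 1"])
  have cp: "w (J (e 1)) (J (e 4)) = w (e 1) (e 4)" using c unfolding compatible_def by auto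
  have "w (J (e 1)) (J (e 4)) = (1/2) * (w (e 2) (e 1) - w (e 2) (e 3) - w (e 4) (e 1) + w (e 4) (e 3))"
    unfolding J_e Jb_def by (simp add: bilinear_lmul[OF b] bilinear_rmul[OF b]
        bilinear_lsub[OF b] bilinear_rsub[OF b] algebra_simps)
  then have cp2: "w (e 2) (e 3) = - w (e 1) (e 4)"
    using cp cl2 antisym[OF tf, of "e 2" "e 1"] antisym[OF tf, of "e 4" "e 1"] antisym[OF tf, of "e 4" "e 3"]
    by (simp add: field_simps)
  have t: "\<And>u. u \<noteq> 0 \<Longrightarrow> w u (J u) > 0" using c unfolding compatible_def tames_def by auto
  have ne: "e i \<noteq> 0" for i by (simp add: e_def)
  have t1: "w (e 1) (J (e 1)) > 0" using t ne by blast
  have t3: "w (e 3) (J (e 3)) > 0" using t ne by blast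
  have v1: "w (e 1) (J (e 1)) = (1 / sqrt 2) * (w (e 1) (e 2) - w (e 1) (e 4))"
    unfolding J_e Jb_def by (simp add: bilinear_rmul[OF b] bilinear_rsub[OF b])
  have v3: "w (e 3) (J (e 3)) = (1 / sqrt 2) * (w (e 3) (e 2) + w (e 3) (e 4))"
    unfolding J_e Jb_def by (simp add: bilinear_rmul[OF b] bilinear_radd[OF b])
  have "w (e 1) (e 2) - w (e 1) (e 4) > 0" using t1 v1 by (simp add: zero_less_divide_iff)
  moreover have "w (e 3) (e 2) + w (e 3) (e 4) > 0" using t3 v3 by (simp add: zero_less_divide_iff)
  ultimately show False using cl2 cp2 antisym[OF tf, of "e 3" "e 2"] by linarith
qed

theorem mainTheorem4:
  shows "(\<exists>\<omega>. symplectic \<omega> \<and> tames \<omega> J) \<and> \<not> (\<exists>\<omega>. symplectic \<omega> \<and> compatible \<omega> J)"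
  using w0_symp w0_tames no_compat by blast

end
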